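(* Let $n\ge2$ and consider $\mathbb R^n\times\bigwedge^2(\mathbb R^n)$ with an adequate scalar product and induced norm $\lVert\cdot\rVert_{\mathrm{eu}}$. There exists a constant $K_1$ such that for every $(n-1)$-tuple $(x_1,\dots,x_{n-1})$ of points of $\mathbb R^n$, every $Y\in\bigwedge^2(\mathbb R^n)$ and every $\varepsilon>0$ with $\mathrm{MinHeight}(x_1,\dots,x_{n-1})\ge\varepsilon$, there exist $v_1,\dots,v_{n-1}\in\mathbb R^n$ such that $$Y=\sum_{j=1}^{n-1}x_j\wedge v_j\quad\text{and}\quad \lVert v_j\rVert_{\mathrm{eu}}\le K_1\frac{\lVert Y\rVert_{\mathrm{eu}}}{\varepsilon}\ \text{for every } j\in\{1,\dots,n-1\}.$$
   Context: $v\wedge w:=v\otimes w-w\otimes v$, and $\bigwedge^2(\mathbb R^n)$ is the span of such tensors. A scalar product on $\mathbb R^n\times\bigwedge^2(\mathbb R^n)$ is adequate if $\mathbb R^n\perp\bigwedge^2(\mathbb R^n)$ and $\langle v_1\wedge w_1,v_2\wedge w_2\rangle=\langle v_1,v_2\rangle\langle w_1,w_2\rangle-\langle v_1,w_2\rangle\langle w_1,v_2\rangle$. $\mathrm{MinHeight}(a_1,\dots,a_m):=\min_j d_{\mathrm{eu}}(a_j,\mathrm{span}(a_1,\dots,\widehat a_j,\dots,a_m))$, where $\widehat a_j$ means $a_j$ is omitted and $d_{\mathrm{eu}}$ is the distance from $\lVert\cdot\rVert_{\mathrm{eu}}$ on $\mathbb R^n$. *)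

theory Defs
  imports "HOL-Analysis.Analysis"
begin

text \<open>Tensors in R^n (x) R^n are represented as matrices real^'n^'n;
  v \<wedge> w := v (x) w - w (x) v.\<close>
definition wedge :: "real^'n \<Rightarrow> real^'n \<Rightarrow> real^'n^'n" where
  "wedge v w = (\<chi> i j. v$i * w$j - w$i * v$j)"

definition Lambda2 :: "(real^'n^'n) set" where
  "Lambda2 = span {wedge v w | v w. True}"

definition Amb :: "((real^'n) \<times> (real^'n^'n)) set" where
  "Amb = UNIV \<times> Lambda2"

definition adequate ::
  "(((real^'n) \<times> (real^'n^'n)) \<Rightarrow> ((real^'n) \<times> (real^'n^'n)) \<Rightarrow> real) \<Rightarrow> bool" where
  "adequate ip \<longleftrightarrow>
     (\<forall>a\<in>Amb. \<forall>b\<in>Amb. ip a b = ip b a) \<and>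
     (\<forall>a\<in>Amb. \<forall>b\<in>Amb. \<forall>c\<in>Amb. ip (a + b) c = ip a c + ip b c) \<and>
     (\<forall>a\<in>Amb. \<forall>c\<in>Amb. \<forall>r::real. ip (r *\<^sub>R a) c = r * ip a c) \<and>
     (\<forall>a\<in>Amb. a \<noteq> 0 \<longrightarrow> ip a a > 0) \<and>
     (\<forall>x. \<forall>Y\<in>Lambda2. ip (x, 0) (0, Y) = 0) \<and>
     (\<forall>v1 w1 v2 w2. ip (0, wedge v1 w1) (0, wedge v2 w2) =
         ip (v1, 0) (v2, 0) * ip (w1, 0) (w2, 0) - ip (v1, 0) (w2, 0) * ip (w1, 0) (v2, 0))"

definition eunorm ::
  "(((real^'n) \<times> (real^'n^'n)) \<Rightarrow> ((real^'n) \<times> (real^'n^'n)) \<Rightarrow> real) \<Rightarrow> ((real^'n) \<times> (real^'n^'n)) \<Rightarrow> real" where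
  "eunorm ip z = sqrt (ip z z)"

definition eudist_set ::
  "(((real^'n) \<times> (real^'n^'n)) \<Rightarrow> ((real^'n) \<times> (real^'n^'n)) \<Rightarrow> real) \<Rightarrow> real^'n \<Rightarrow> (real^'n) set \<Rightarrow> real" where
  "eudist_set ip a S = Inf {eunorm ip (a - s, 0) | s. s \<in> S}"

text \<open>MinHeight of the m-tuple a_0, ..., a_{m-1} (indices shifted to start at 0), m \<ge> 1.\<close>
definition MinHeight ::
  "(((real^'n) \<times> (real^'n^'n)) \<Rightarrow> ((real^'n) \<times> (real^'n^'n)) \<Rightarrow> real) \<Rightarrow> nat \<Rightarrow> (nat \<Rightarrow> real^'n) \<Rightarrow> real" where
  "MinHeight ip m a = Min ((\<lambda>j. eudist_set ip (a j) (span (a ` ({..<m} - {j})))) ` {..<m})"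

end

theory Submission
  imports Defs
begin

lemma Amb_iff[simp]: "(a, b) \<in> Amb \<longleftrightarrow> b \<in> Lambda2"
  by (auto simp: Amb_def)

lemma L2_zero[simp]: "0 \<in> Lambda2"
  by (simp add: Lambda2_def span_zero)

lemma L2_wedge[simp]: "wedge v w \<in> Lambda2"
  unfolding Lambda2_def by (rule span_base) auto

lemma L2_add[simp]: "A \<in> Lambda2 \<Longrightarrow> B \<in> Lambda2 \<Longrightarrow> A + B \<in> Lambda2"
  by (simp add: Lambda2_def span_add)

lemma L2_diff[simp]: "A \<in> Lambda2 \<Longrightarrow> B \<in> Lambda2 \<Longrightarrow> A - B \<in> Lambda2"
  by (simp add: Lambda2_def span_diff)

lemma L2_scale[simp]: "A \<in> Lambda2 \<Longrightarrow> c *\<^sub>R A \<in> Lambda2"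
  by (simp add: Lambda2_def span_mul)

lemma L2_sum[simp]: "(\<And>j. j \<in> S \<Longrightarrow> A j \<in> Lambda2) \<Longrightarrow> sum A S \<in> Lambda2"
  unfolding Lambda2_def by (rule span_sum) auto

lemma Amb_add[simp]: "a \<in> Amb \<Longrightarrow> b \<in> Amb \<Longrightarrow> a + b \<in> Amb"
  by (cases a; cases b) auto
lemma Amb_diff[simp]: "a \<in> Amb \<Longrightarrow> b \<in> Amb \<Longrightarrow> a - b \<in> Amb"
  by (cases a; cases b) auto
lemma Amb_scale[simp]: "a \<in> Amb \<Longrightarrow> c *\<^sub>R a \<in> Amb"
  by (cases a) auto

lemma wedge_add1: "wedge (a + b) c = wedge a c + wedge b c"
  by (simp add: wedge_def vec_eq_iff algebra_simps)
lemma wedge_scale1: "wedge (r *\<^sub>R a) c = r *\<^sub>R wedge a c"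
  by (simp add: wedge_def vec_eq_iff algebra_simps)
lemma wedge_swap: "wedge a b = - wedge b a"
  by (simp add: wedge_def vec_eq_iff algebra_simps)
lemma wedge_self_scale: "wedge a (r *\<^sub>R a) = 0"
  by (simp add: wedge_def vec_eq_iff algebra_simps)
lemma linear_wedge1: "linear (\<lambda>a. wedge a c)"
  by (rule linearI) (simp_all add: wedge_add1 wedge_scale1)
lemma linear_wedge2: "linear (\<lambda>c. wedge a c)"
  by (rule linearI) (simp_all add: wedge_def vec_eq_iff algebra_simps)

definition gg :: "(((real^'n) \<times> (real^'n^'n)) \<Rightarrow> ((real^'n) \<times> (real^'n^'n)) \<Rightarrow> real) \<Rightarrow> real^'n \<Rightarrow> real^'n \<Rightarrow> real"
  where "gg ip a b = ip (a, 0) (b, 0)"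

definition Bf :: "(((real^'n) \<times> (real^'n^'n)) \<Rightarrow> ((real^'n) \<times> (real^'n^'n)) \<Rightarrow> real) \<Rightarrow> real^'n^'n \<Rightarrow> real^'n \<Rightarrow> real^'n \<Rightarrow> real"
  where "Bf ip Y a b = ip (0, Y) (0, wedge a b)"

context
  fixes ip :: "((real^'n) \<times> (real^'n^'n)) \<Rightarrow> ((real^'n) \<times> (real^'n^'n)) \<Rightarrow> real"
  assumes adq: "adequate ip"
begin

lemma ip_sym: "a \<in> Amb \<Longrightarrow> b \<in> Amb \<Longrightarrow> ip a b = ip b a"
  using adq unfolding adequate_def by blast
lemma ip_add1: "a \<in> Amb \<Longrightarrow> b \<in> Amb \<Longrightarrow> c \<in> Amb \<Longrightarrow> ip (a + b) c = ip a c + ip b c"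
  using adq unfolding adequate_def by blast
lemma ip_scale1: "a \<in> Amb \<Longrightarrow> c \<in> Amb \<Longrightarrow> ip (r *\<^sub>R a) c = r * ip a c"
  using adq unfolding adequate_def by blast
lemma ip_pos: "a \<in> Amb \<Longrightarrow> a \<noteq> 0 \<Longrightarrow> ip a a > 0"
  using adq unfolding adequate_def by blast
lemma ip_wedge: "ip (0, wedge v1 w1) (0, wedge v2 w2) =
         ip (v1, 0) (v2, 0) * ip (w1, 0) (w2, 0) - ip (v1, 0) (w2, 0) * ip (w1, 0) (v2, 0)"
  using adq unfolding adequate_def by blast
lemma ip_add2: "a \<in> Amb \<Longrightarrow> b \<in> Amb \<Longrightarrow> c \<in> Amb \<Longrightarrow> ip a (b + c) = ip a b + ip a c"
  by (metis Amb_add ip_sym ip_add1)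
lemma ip_scale2: "a \<in> Amb \<Longrightarrow> c \<in> Amb \<Longrightarrow> ip c (r *\<^sub>R a) = r * ip c a"
  by (metis Amb_scale ip_sym ip_scale1)
lemma ip_zero1: "c \<in> Amb \<Longrightarrow> ip 0 c = 0"
  using ip_scale1[of c c 0] by simp
lemma ip_nonneg: "a \<in> Amb \<Longrightarrow> ip a a \<ge> 0"
  using ip_pos[of a] ip_zero1[of 0] by (cases "a = 0") (auto simp: Amb_def)
lemma ip_zero_iff: "a \<in> Amb \<Longrightarrow> ip a a = 0 \<longleftrightarrow> a = 0"
  using ip_pos[of a] ip_zero1[of 0] by (cases "a = 0") (auto simp: Amb_def)

lemma ip_CS: assumes "a \<in> Amb" "b \<in> Amb" shows "(ip a b)^2 \<le> ip a a * ip b b"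
proof (cases "a = 0")
  case True then show ?thesis using ip_zero1 assms by simp
next
  case False
  define t where "t = ip a b / ip a a"
  have pa: "ip a a > 0" using ip_pos assms False by auto
  have "0 \<le> ip (b - t *\<^sub>R a) (b - t *\<^sub>R a)" using assms by (intro ip_nonneg) simp
  also have "b - t *\<^sub>R a = b + (-t) *\<^sub>R a" by simp
  also have "ip (b + (-t) *\<^sub>R a) (b + (-t) *\<^sub>R a) = ip b b - 2 * t * ip a b + t*t * ip a a"
  proof -
    have e: "ip (b + s *\<^sub>R a) (b + s *\<^sub>R a) = ip b b + 2 * s * ip a b + s * s * ip a a" for s
    proof -
      have "ip (b + s *\<^sub>R a) (b + s *\<^sub>R a) = ip b (b + s *\<^sub>R a) + s * ip a (b + s *\<^sub>R a)"
        using assms by (simp add: ip_add1 ip_scale1)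
      also have "\<dots> = ip b b + s * ip b a + s * (ip a b + s * ip a a)"
        using assms by (simp add: ip_add2 ip_scale2)
      finally show ?thesis using ip_sym[OF assms] by (simp add: algebra_simps)
    qed
    show ?thesis using e[of "-t"] by simp
  qed
  also have "\<dots> = ip b b - (ip a b)^2 / ip a a"
    using pa by (simp add: t_def field_simps power2_eq_square)
  finally show ?thesis using pa by (simp add: field_simps mult.commute)
qed


lemma gg_sym: "gg ip a b = gg ip b a"
  unfolding gg_def by (rule ip_sym) simp_all

lemma pair_add0: "(a + c, 0::real^'n^'n) = (a, 0) + (c, 0)" by simp
lemma pair_scale0: "(r *\<^sub>R a, 0::real^'n^'n) = r *\<^sub>R (a, 0)" by simp
lemma pair0_add: "(0::real^'n, A + C) = (0, A) + (0, C)" by simp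
lemma pair0_scale: "(0::real^'n, r *\<^sub>R A) = r *\<^sub>R (0, A)" by simp

lemma gg_lin1: "linear (\<lambda>a. gg ip a b)"
  by (rule linearI) (simp_all only: gg_def pair_add0 pair_scale0 ip_add1 ip_scale1 Amb_iff L2_zero real_scaleR_def)

lemma gg_lin2: "linear (\<lambda>b. gg ip a b)"
  by (rule linearI) (simp_all only: gg_def pair_add0 pair_scale0 ip_add2 ip_scale2 Amb_iff L2_zero real_scaleR_def)

lemma gg_pos: "a \<noteq> 0 \<Longrightarrow> gg ip a a > 0"
  unfolding gg_def by (rule ip_pos) (simp_all add: zero_prod_def)

lemma gg_nonneg: "gg ip a a \<ge> 0"
  unfolding gg_def by (rule ip_nonneg) simp

lemma gg_zero_iff: "gg ip a a = 0 \<longleftrightarrow> a = 0"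
  unfolding gg_def using ip_zero_iff[of "(a,0)"] by (simp add: zero_prod_def)

lemma Bf_lin1: "Y \<in> Lambda2 \<Longrightarrow> linear (\<lambda>a. Bf ip Y a b)"
  by (rule linearI) (simp_all only: Bf_def wedge_add1 wedge_scale1 pair0_add pair0_scale ip_add2 ip_scale2 Amb_iff L2_wedge L2_add L2_scale real_scaleR_def)

lemma Bf_lin2: "Y \<in> Lambda2 \<Longrightarrow> linear (\<lambda>b. Bf ip Y a b)"
proof -
  assume Y: "Y \<in> Lambda2"
  have l: "linear (\<lambda>b. wedge a b)" by (rule linear_wedge2)
  show ?thesis
    by (rule linearI) (simp_all only: Bf_def linear_add[OF l] linear_scale[OF l] pair0_add pair0_scale ip_add2 ip_scale2 Amb_iff L2_wedge L2_add L2_scale Y real_scaleR_def)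
qed

lemma Bf_antisym: "Y \<in> Lambda2 \<Longrightarrow> Bf ip Y a b = - Bf ip Y b a"
proof -
  assume Y: "Y \<in> Lambda2"
  have "Bf ip Y a b = Bf ip Y b a * (-1)"
    unfolding Bf_def wedge_swap[of a b]
    using ip_scale2[of "(0, wedge b a)" "(0, Y)" "-1"] Y by simp
  then show ?thesis by simp
qed

lemma Bf_par: "Y \<in> Lambda2 \<Longrightarrow> Bf ip Y a (r *\<^sub>R a) = 0"
  unfolding Bf_def wedge_self_scale using ip_scale2[of "(0, 0)" "(0, Y)" 0] by simp

lemma Bf_bound: assumes "Y \<in> Lambda2"
  shows "(Bf ip Y a b)^2 \<le> ip (0,Y) (0,Y) * (gg ip a a * gg ip b b)"
proof -
  have 1: "(Bf ip Y a b)^2 \<le> ip (0,Y) (0,Y) * ip (0, wedge a b) (0, wedge a b)"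
    unfolding Bf_def using assms by (intro ip_CS) simp_all
  have e: "gg ip b a = gg ip a b" by (rule gg_sym)
  have 2: "ip (0, wedge a b) (0, wedge a b) = gg ip a a * gg ip b b - gg ip a b * gg ip a b"
    unfolding ip_wedge gg_def[symmetric] e ..
  have 3: "ip (0, wedge a b) (0, wedge a b) \<le> gg ip a a * gg ip b b"
    unfolding 2 by simp
  have 4: "ip (0,Y) (0,Y) \<ge> 0" using ip_nonneg[of "(0,Y)"] assms by simp
  show ?thesis using 1 mult_left_mono[OF 3 4] by linarith
qed

lemma orth_span: assumes "\<forall>b\<in>B. gg ip z b = 0" "s \<in> span B" shows "gg ip z s = 0"
proof -
  have l: "linear (\<lambda>b. gg ip z b)" by (rule gg_lin2)
  have "subspace {s. gg ip z s = 0}"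
    unfolding subspace_def using linear_0[OF l] linear_add[OF l] linear_scale[OF l] by simp
  then have "span B \<subseteq> {s. gg ip z s = 0}" using assms(1) by (intro span_minimal) auto
  then show ?thesis using assms(2) by auto
qed

lemma gg_diff1: "gg ip (a - c) b = gg ip a b - gg ip c b"
  using linear_diff[OF gg_lin1] .
lemma gg_diff2: "gg ip b (a - c) = gg ip b a - gg ip b c"
  using linear_diff[OF gg_lin2] .
lemma gg_add1: "gg ip (a + c) b = gg ip a b + gg ip c b"
  using linear_add[OF gg_lin1] .
lemma gg_add2: "gg ip b (a + c) = gg ip b a + gg ip b c"
  using linear_add[OF gg_lin2] .
lemma gg_scale1: "gg ip (r *\<^sub>R a) b = r * gg ip a b"
  using linear_scale[OF gg_lin1] by simp
lemma gg_scale2: "gg ip b (r *\<^sub>R a) = r * gg ip b a"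
  using linear_scale[OF gg_lin2] by simp

lemma proj_ex: "finite B \<Longrightarrow> \<forall>x. \<exists>p\<in>span B. \<forall>b\<in>B. gg ip (x - p) b = 0"
proof (induction B rule: finite_induct)
  case empty then show ?case by (auto intro: span_zero)
next
  case (insert b B)
  show ?case
  proof
    fix x
    obtain p1 where p1: "p1 \<in> span B" "\<forall>b'\<in>B. gg ip (x - p1) b' = 0" using insert.IH by blast
    obtain q where q: "q \<in> span B" "\<forall>b'\<in>B. gg ip (b - q) b' = 0" using insert.IH by blast
    define r where "r = b - q"
    have sub: "span B \<subseteq> span (insert b B)" by (rule span_mono) auto
    show "\<exists>p\<in>span (insert b B). \<forall>b'\<in>insert b B. gg ip (x - p) b' = 0"
    proof (cases "r = 0")
      case True
      then have "b = q" by (simp add: r_def)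
      then have "gg ip (x - p1) b = 0" using orth_span[OF p1(2) q(1)] by simp
      then show ?thesis using p1 sub by auto
    next
      case False
      define c where "c = gg ip (x - p1) r / gg ip r r"
      have rp: "gg ip r r > 0" using gg_pos False by auto
      define p where "p = p1 + c *\<^sub>R r"
      have rin: "r \<in> span (insert b B)" unfolding r_def
        using sub q(1) by (intro span_diff) (auto intro: span_base)
      have pin: "p \<in> span (insert b B)" unfolding p_def
        using sub p1(1) rin by (intro span_add span_mul) auto
      have xp: "x - p = (x - p1) - c *\<^sub>R r" by (simp add: p_def)
      have orthB: "\<forall>b'\<in>B. gg ip (x - p) b' = 0"
      proof
        fix b' assume b': "b' \<in> B"
        have "gg ip (x - p) b' = gg ip (x - p1) b' - c * gg ip r b'"
          unfolding xp gg_diff1 gg_scale1 ..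
        then show "gg ip (x - p) b' = 0" using p1(2) q(2) b' r_def by simp
      qed
      have "gg ip (x - p) q = 0" by (rule orth_span[OF orthB q(1)])
      moreover have "gg ip (x - p) r = 0"
      proof -
        have "gg ip (x - p) r = gg ip (x - p1) r - c * gg ip r r"
          unfolding xp gg_diff1 gg_scale1 ..
        then show ?thesis using rp by (simp add: c_def)
      qed
      ultimately have "gg ip (x - p) b = 0" using gg_add2[of "x - p" r q] by (simp add: r_def)
      then show ?thesis using pin orthB by auto
    qed
  qed
qed

lemma indep_insert_orth:
  assumes "independent S" "v \<noteq> 0" "\<forall>s\<in>S. gg ip v s = 0"
  shows "independent (insert v S) \<and> v \<notin> S"
proof -
  have "v \<notin> span S"
  proof
    assume "v \<in> span S"
    then have "gg ip v v = 0" by (rule orth_span[OF assms(3)])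
    then show False using gg_zero_iff assms(2) by simp
  qed
  then show ?thesis using assms(1) independent_insert span_base by metis
qed

lemma lin_expand:
  fixes phi :: "real^'n \<Rightarrow> real"
  assumes "linear phi"
  shows "phi x = (\<Sum>b\<in>Basis. (x \<bullet> b) * phi b)"
proof -
  have "phi x = phi (\<Sum>b\<in>Basis. (x \<bullet> b) *\<^sub>R b)" by (simp add: euclidean_representation)
  also have "\<dots> = (\<Sum>b\<in>Basis. (x \<bullet> b) * phi b)"
    by (simp add: linear_sum[OF assms] linear_scale[OF assms])
  finally show ?thesis .
qed

lemma riesz:
  fixes phi :: "real^'n \<Rightarrow> real"
  assumes "linear phi"
  shows "\<exists>w. \<forall>y. gg ip w y = phi y"
proof -
  define G where "G v = (\<Sum>b\<in>(Basis::(real^'n) set). gg ip v b *\<^sub>R b)" for v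
  have Gi: "G v \<bullet> y = gg ip v y" for v y
  proof -
    have "G v \<bullet> y = (\<Sum>b\<in>Basis. gg ip v b * (b \<bullet> y))"
      by (simp add: G_def inner_sum_left)
    also have "\<dots> = (\<Sum>b\<in>Basis. (y \<bullet> b) * gg ip v b)"
      by (simp add: inner_commute mult.commute)
    also have "\<dots> = gg ip v y" using lin_expand[OF gg_lin2, of v y] by simp
    finally show ?thesis .
  qed
  have lG: "linear G"
    by (rule linearI) (simp_all add: G_def gg_add1 gg_scale1 scaleR_add_left sum.distrib scaleR_sum_right)
  have "inj G"
  proof (rule injI)
    fix u v assume "G u = G v"
    then have "G (u - v) = 0" using linear_diff[OF lG] by simp
    then have "gg ip (u - v) (u - v) = 0" using Gi[of "u - v" "u - v"] by simp
    then show "u = v" using gg_zero_iff by simp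
  qed
  then have "surj G" using linear_inj_imp_surj[OF lG] by simp
  then obtain w where w: "G w = (\<Sum>b\<in>Basis. phi b *\<^sub>R b)" by (metis surjD)
  have "gg ip w y = phi y" for y
  proof -
    have "gg ip w y = (\<Sum>b\<in>Basis. phi b *\<^sub>R b) \<bullet> y" using Gi[of w y] w by simp
    also have "\<dots> = (\<Sum>b\<in>Basis. phi b * (b \<bullet> y))"
      by (simp add: inner_sum_left)
    also have "\<dots> = (\<Sum>b\<in>Basis. (y \<bullet> b) * phi b)"
      by (simp add: inner_commute mult.commute)
    also have "\<dots> = phi y" using lin_expand[OF assms, of y] by simp
    finally show ?thesis .
  qed
  then show ?thesis by blast
qed

lemma DIM_vec: "DIM(real^'n) = CARD('n)" by simp

lemma par_lemma:
  fixes X :: "(real^'n) set"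
  assumes indX: "independent X" and cX: "card X + 1 = CARD('n)"
    and oa: "\<forall>s\<in>X. gg ip a s = 0" and ob: "\<forall>s\<in>X. gg ip b s = 0"
  shows "a = 0 \<or> (\<exists>r. b = r *\<^sub>R a)"
proof (rule ccontr)
  assume H: "\<not> (a = 0 \<or> (\<exists>r. b = r *\<^sub>R a))"
  then have a0: "a \<noteq> 0" by auto
  have i1: "independent (insert a X) \<and> a \<notin> X" using indep_insert_orth[OF indX a0 oa] .
  define r where "r = gg ip b a / gg ip a a"
  define b' where "b' = b - r *\<^sub>R a"
  have b0: "b' \<noteq> 0" using H unfolding b'_def by auto
  have ap: "gg ip a a > 0" using gg_pos a0 by auto
  have ob': "\<forall>s\<in>insert a X. gg ip b' s = 0"
  proof
    fix s assume "s \<in> insert a X"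
    then show "gg ip b' s = 0"
    proof
      assume "s = a" then show ?thesis using ap by (simp add: b'_def gg_diff1 gg_scale1 r_def)
    next
      assume "s \<in> X" then show ?thesis using oa ob by (simp add: b'_def gg_diff1 gg_scale1)
    qed
  qed
  have i2: "independent (insert b' (insert a X)) \<and> b' \<notin> insert a X"
    using indep_insert_orth[OF conjunct1[OF i1] b0 ob'] .
  have fX: "finite X" using indX independent_bound by blast
  have "card (insert b' (insert a X)) = CARD('n) + 1" using i1 i2 fX cX by simp
  moreover have "card (insert b' (insert a X)) \<le> CARD('n)"
    using independent_bound[OF conjunct1[OF i2]] by simp
  ultimately show False by simp
qed

lemma L2_ortho_zero:
  assumes Z: "Z \<in> Lambda2" and h: "\<forall>a b. ip (0, Z) (0, wedge a b) = 0"
  shows "Z = 0"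
proof -
  define T where "T = {W. W \<in> Lambda2 \<and> ip (0, Z) (0, W) = 0}"
  have "subspace T"
    unfolding subspace_def T_def
  proof (intro conjI ballI allI)
    show "0 \<in> {W. W \<in> Lambda2 \<and> ip (0, Z) (0, W) = 0}"
      using ip_scale2[of "(0,0)" "(0,Z)" 0] Z by simp
  next
    fix u v assume u: "u \<in> {W. W \<in> Lambda2 \<and> ip (0, Z) (0, W) = 0}"
      and v: "v \<in> {W. W \<in> Lambda2 \<and> ip (0, Z) (0, W) = 0}"
    then show "u + v \<in> {W. W \<in> Lambda2 \<and> ip (0, Z) (0, W) = 0}"
      using ip_add2[of "(0,Z)" "(0,u)" "(0,v)"] Z by (simp add: pair0_add[symmetric])
  next
    fix c u assume u: "u \<in> {W. W \<in> Lambda2 \<and> ip (0, Z) (0, W) = 0}"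
    then show "c *\<^sub>R u \<in> {W. W \<in> Lambda2 \<and> ip (0, Z) (0, W) = 0}"
      using ip_scale2[of "(0,u)" "(0,Z)" c] Z by (simp add: pair0_scale[symmetric])
  qed
  moreover have "{wedge v w | v w. True} \<subseteq> T" using h unfolding T_def by auto
  ultimately have "Lambda2 \<subseteq> T" unfolding Lambda2_def by (rule span_minimal[rotated])
  then have "ip (0, Z) (0, Z) = 0" using Z unfolding T_def by auto
  then have "(0::real^'n, Z) = 0" using ip_zero_iff[of "(0,Z)"] Z by simp
  then show ?thesis by (simp add: zero_prod_def)
qed

lemma ip_sum1:
  assumes "finite S" "\<And>j. j \<in> S \<Longrightarrow> W j \<in> Lambda2" "c \<in> Lambda2"
  shows "ip (0, sum W S) (0, c) = (\<Sum>j\<in>S. ip (0, W j) (0, c))"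
  using assms
proof (induction S rule: finite_induct)
  case empty then show ?case using ip_zero1[of "(0,c)"] by (simp add: zero_prod_def)
next
  case (insert j S)
  have "ip (0, sum W (insert j S)) (0, c) = ip ((0, W j) + (0, sum W S)) (0, c)"
    using insert.hyps by simp
  also have "\<dots> = ip (0, W j) (0, c) + ip (0, sum W S) (0, c)"
    using insert.prems by (intro ip_add1) auto
  finally show ?case using insert by simp
qed

lemma ip_diff1:
  assumes "A \<in> Lambda2" "B \<in> Lambda2" "c \<in> Lambda2"
  shows "ip (0, A - B) (0, c) = ip (0, A) (0, c) - ip (0, B) (0, c)"
proof -
  have "(0::real^'n, A - B) = (0, A) + (-1) *\<^sub>R (0, B)" by simp
  then have "ip (0, A - B) (0, c) = ip (0, A) (0, c) + ip ((-1) *\<^sub>R (0, B)) (0, c)"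
    using assms ip_add1[of "(0,A)" "(-1) *\<^sub>R (0, B)" "(0,c)"] L2_scale[of B "-1"] by simp
  also have "ip ((-1) *\<^sub>R (0, B)) (0, c) = - ip (0, B) (0, c)"
    using assms ip_scale1[of "(0,B)" "(0,c)" "-1"] by simp
  finally show ?thesis by simp
qed

lemma dual_ex:
  fixes x :: "nat \<Rightarrow> real^'n"
  assumes j: "j < m" and ht: "\<forall>s\<in>span (x ` ({..<m} - {j})). \<epsilon> \<le> sqrt (gg ip (x j - s) (x j - s))"
    and e: "\<epsilon> > 0"
  shows "\<exists>f. (\<forall>k<m. gg ip f (x k) = (if k = j then 1 else 0)) \<and> gg ip f f \<le> 1 / \<epsilon>^2
              \<and> f \<in> span (x ` {..<m})"
proof -
  define B where "B = x ` ({..<m} - {j})"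
  have fB: "finite B" by (simp add: B_def)
  obtain p where p: "p \<in> span B" "\<forall>b\<in>B. gg ip (x j - p) b = 0"
    using proj_ex[OF fB] by blast
  define r where "r = x j - p"
  have "\<epsilon> \<le> sqrt (gg ip r r)" using ht p(1) by (simp add: B_def r_def)
  then have "\<epsilon>^2 \<le> (sqrt (gg ip r r))^2" using e by (intro power_mono) auto
  then have rr: "\<epsilon>^2 \<le> gg ip r r" using gg_nonneg by simp
  have rpos: "gg ip r r > 0" using rr e by (smt (verit) zero_less_power)
  have rp: "gg ip r p = 0" using orth_span[of B r p] p by (simp add: r_def)
  have rxj: "gg ip r (x j) = gg ip r r"
  proof -
    have "x j = r + p" by (simp add: r_def)
    then have "gg ip r (x j) = gg ip r r + gg ip r p" by (simp add: gg_add2)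
    then show ?thesis using rp by simp
  qed
  define f where "f = (1 / gg ip r r) *\<^sub>R r"
  have "\<forall>k<m. gg ip f (x k) = (if k = j then 1 else 0)"
  proof (intro allI impI)
    fix k assume k: "k < m"
    show "gg ip f (x k) = (if k = j then 1 else 0)"
    proof (cases "k = j")
      case True then show ?thesis using rxj rpos by (simp add: f_def gg_scale1)
    next
      case False
      then have "x k \<in> B" using k by (auto simp: B_def)
      then show ?thesis using p(2) False by (simp add: f_def gg_scale1 r_def)
    qed
  qed
  moreover have "gg ip f f \<le> 1 / \<epsilon>^2"
  proof -
    have "gg ip f f = 1 / gg ip r r" using rpos by (simp add: f_def gg_scale1 gg_scale2)
    also have "\<dots> \<le> 1 / \<epsilon>^2" using rr e rpos by (intro divide_left_mono) auto
    finally show ?thesis .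
  qed
  moreover have "f \<in> span (x ` {..<m})"
  proof -
    have "span B \<subseteq> span (x ` {..<m})" by (rule span_mono) (auto simp: B_def)
    then have "p \<in> span (x ` {..<m})" using p(1) by auto
    moreover have "x j \<in> span (x ` {..<m})" using j by (intro span_base) auto
    ultimately show ?thesis unfolding f_def r_def by (intro span_mul span_diff)
  qed
  ultimately show ?thesis by blast
qed

lemma gg_expand: "gg ip (a + t *\<^sub>R b) (a + t *\<^sub>R b) = gg ip a a + 2 * t * gg ip a b + t * t * gg ip b b"
proof -
  have "gg ip (a + t *\<^sub>R b) (a + t *\<^sub>R b) = gg ip a a + t * gg ip a b + t * (gg ip b a + t * gg ip b b)"
    by (simp add: gg_add1 gg_add2 gg_scale1 gg_scale2 algebra_simps)
  then show ?thesis using gg_sym[of b a] by (simp add: algebra_simps)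
qed

lemma main_aux:
  assumes n2: "CARD('n) \<ge> 2"
  shows "\<exists>K1::real. \<forall>(x :: nat \<Rightarrow> real^'n) (Y :: real^'n^'n) (\<epsilon>::real).
           Y \<in> Lambda2 \<and> \<epsilon> > 0 \<and> MinHeight ip (CARD('n) - 1) x \<ge> \<epsilon> \<longrightarrow>
           (\<exists>v :: nat \<Rightarrow> real^'n.
              Y = (\<Sum>j<CARD('n) - 1. wedge (x j) (v j)) \<and>
              (\<forall>j<CARD('n) - 1. eunorm ip (v j, 0) \<le> K1 * eunorm ip (0, Y) / \<epsilon>))"
proof (intro exI[of _ 1] allI impI, elim conjE)
  fix x :: "nat \<Rightarrow> real^'n" and Y :: "real^'n^'n" and \<epsilon> :: real
  assume Y: "Y \<in> Lambda2" and e: "\<epsilon> > 0" and mh: "MinHeight ip (CARD('n) - 1) x \<ge> \<epsilon>"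
  define m where "m = CARD('n) - 1"
  have m1: "m + 1 = CARD('n)" using n2 by (simp add: m_def)
  have eun: "eunorm ip (v, 0) = sqrt (gg ip v v)" for v by (simp add: eunorm_def gg_def)
  have ht: "\<forall>j<m. \<forall>s\<in>span (x ` ({..<m} - {j})). \<epsilon> \<le> sqrt (gg ip (x j - s) (x j - s))"
  proof (intro allI impI ballI)
    fix j s assume j: "j < m" and s: "s \<in> span (x ` ({..<m} - {j}))"
    let ?D = "eudist_set ip (x j) (span (x ` ({..<m} - {j})))"
    have "MinHeight ip m x \<le> ?D" unfolding MinHeight_def by (rule Min_le) (use j in auto)
    moreover have "?D \<le> eunorm ip (x j - s, 0)" unfolding eudist_set_def
    proof (rule cInf_lower)
      show "eunorm ip (x j - s, 0) \<in> {eunorm ip (x j - s, 0) |s. s \<in> span (x ` ({..<m} - {j}))}"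
        using s by blast
      show "bdd_below {eunorm ip (x j - s, 0) |s. s \<in> span (x ` ({..<m} - {j}))}"
        by (rule bdd_belowI[of _ 0]) (auto simp: eun gg_nonneg)
    qed
    ultimately show "\<epsilon> \<le> sqrt (gg ip (x j - s) (x j - s))" using mh by (simp add: m_def eun)
  qed
  have notin: "x j \<notin> span (x ` ({..<m} - {j}))" if j: "j < m" for j
  proof
    assume "x j \<in> span (x ` ({..<m} - {j}))"
    then have "\<epsilon> \<le> sqrt (gg ip (x j - x j) (x j - x j))" using ht j by blast
    then show False using e gg_zero_iff[of 0] by simp
  qed
  define X where "X = x ` {..<m}"
  have injx: "inj_on x {..<m}"
  proof (rule inj_onI)
    fix i j assume i: "i \<in> {..<m}" and j: "j \<in> {..<m}" and eq: "x i = x j"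
    show "i = j"
    proof (rule ccontr)
      assume "i \<noteq> j"
      then have "x i \<in> span (x ` ({..<m} - {i}))" using j eq by (intro span_base) auto
      then show False using notin i by auto
    qed
  qed
  have cX: "card X + 1 = CARD('n)" using card_image[OF injx] m1 by (simp add: X_def)
  have indX: "independent X"
  proof
    assume "dependent X"
    then obtain a where a: "a \<in> X" "a \<in> span (X - {a})" unfolding dependent_def by blast
    then obtain j where j: "j < m" "a = x j" by (auto simp: X_def)
    have "X - {a} \<subseteq> x ` ({..<m} - {j})" using j by (auto simp: X_def)
    then have "a \<in> span (x ` ({..<m} - {j}))" using a(2) span_mono by blast
    then show False using notin j by simp
  qed
  have "\<forall>j\<in>{..<m}. \<exists>fj. (\<forall>k<m. gg ip fj (x k) = (if k = j then 1 else 0)) \<and> gg ip fj fj \<le> 1 / \<epsilon>^2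
              \<and> fj \<in> span (x ` {..<m})"
    using dual_ex ht e by blast
  then obtain f where f: "\<forall>j\<in>{..<m}. (\<forall>k<m. gg ip (f j) (x k) = (if k = j then 1 else 0)) \<and> gg ip (f j) (f j) \<le> 1 / \<epsilon>^2
              \<and> f j \<in> span X"
    unfolding X_def by (metis bchoice)
  define P where "P w = (\<Sum>k<m. gg ip w (x k) *\<^sub>R f k)" for w
  have PH: "P w \<in> span X" for w
    unfolding P_def using f by (intro span_sum span_mul) auto
  have Px: "gg ip (P w) (x l) = gg ip w (x l)" if l: "l < m" for w l
  proof -
    have "gg ip (P w) (x l) = (\<Sum>k<m. gg ip w (x k) * gg ip (f k) (x l))"
      unfolding P_def by (simp add: linear_sum[OF gg_lin1] gg_scale1)
    also have "\<dots> = (\<Sum>k<m. if k = l then gg ip w (x k) else 0)"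
    proof (intro sum.cong refl)
      fix k assume k: "k \<in> {..<m}"
      then have "gg ip (f k) (x l) = (if l = k then 1 else 0)" using f l by blast
      then show "gg ip w (x k) * gg ip (f k) (x l) = (if k = l then gg ip w (x k) else 0)" by auto
    qed
    also have "\<dots> = gg ip w (x l)" using l by simp
    finally show ?thesis .
  qed
  have Porth: "gg ip (w - P w) h = 0" if "h \<in> span X" for w h
  proof (rule orth_span[OF _ that])
    show "\<forall>b\<in>X. gg ip (w - P w) b = 0" using Px by (auto simp: X_def gg_diff1)
  qed
  have Psa: "gg ip (P w) y = gg ip w (P y)" for w y
  proof -
    have 1: "gg ip (P w) y = gg ip (P w) (P y) + gg ip (y - P y) (P w)"
      using gg_add2[of "P w" "P y" "y - P y"] gg_sym[of "P w" "y - P y"] by simp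
    have 2: "gg ip w (P y) = gg ip (P w) (P y) + gg ip (w - P w) (P y)"
      using gg_add1[of "P w" "w - P w" "P y"] by simp
    show ?thesis using 1 2 Porth[OF PH] by simp
  qed
  have "\<forall>j. \<exists>wj. \<forall>y. gg ip wj y = Bf ip Y (f j) y"
    using riesz[OF Bf_lin2[OF Y]] by blast
  then obtain w where w: "\<And>j y. gg ip (w j) y = Bf ip Y (f j) y" by metis
  define v where "v j = w j - (1/2) *\<^sub>R P (w j)" for j
  define c where "c = ip (0, Y) (0, Y)"
  have c0: "c \<ge> 0" using ip_nonneg[of "(0,Y)"] Y by (simp add: c_def)
  have bound: "eunorm ip (v j, 0) \<le> 1 * eunorm ip (0, Y) / \<epsilon>" if j: "j < m" for j
  proof -
    define W where "W = w j"
    define F where "F = f j"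
    have FF: "gg ip F F \<le> 1 / \<epsilon>^2" using f j by (simp add: F_def)
    have WW: "gg ip W W = Bf ip Y F W" using w by (simp add: W_def F_def)
    have "(gg ip W W)^2 \<le> c * (gg ip F F * gg ip W W)"
      using Bf_bound[OF Y, of F W] WW by (simp add: c_def)
    then have "gg ip W W * gg ip W W \<le> (c * gg ip F F) * gg ip W W"
      by (simp add: power2_eq_square algebra_simps)
    then have W1: "gg ip W W \<le> c * gg ip F F"
      using gg_nonneg[of W] c0 gg_nonneg[of F]
      by (metis mult_le_cancel_right mult_nonneg_nonneg order_le_less)
    define A where "A = W - P W"
    define Q where "Q = P W"
    have AQ: "gg ip A Q = 0" unfolding A_def Q_def by (rule Porth[OF PH])
    have vA: "v j = A + (1/2) *\<^sub>R Q"
      by (simp add: v_def A_def Q_def W_def vec_eq_iff algebra_simps)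
    have "gg ip (v j) (v j) = gg ip (A + (1/2) *\<^sub>R Q) (A + (1/2) *\<^sub>R Q)"
      by (simp only: vA)
    also have "\<dots> = gg ip A A + (1/4) * gg ip Q Q" unfolding gg_expand AQ by simp
    also have "\<dots> \<le> gg ip A A + gg ip Q Q" using gg_nonneg[of Q] by simp
    also have "gg ip A A + gg ip Q Q = gg ip (A + 1 *\<^sub>R Q) (A + 1 *\<^sub>R Q)" unfolding gg_expand AQ by simp
    also have "\<dots> = gg ip W W" by (simp add: A_def Q_def)
    also have "\<dots> \<le> c * gg ip F F" by (rule W1)
    also have "\<dots> \<le> c * (1 / \<epsilon>^2)" by (rule mult_left_mono[OF FF c0])
    also have "\<dots> = (sqrt c / \<epsilon>)^2" using c0 by (simp add: power_divide)
    finally have "sqrt (gg ip (v j) (v j)) \<le> sqrt ((sqrt c / \<epsilon>)^2)" by (rule real_sqrt_le_mono)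
    also have "\<dots> = sqrt c / \<epsilon>" using c0 e by simp
    finally show ?thesis by (simp add: eun c_def) (simp add: eunorm_def)
  qed
  have Bfs: "(\<Sum>j<m. gg ip (x j) a * Bf ip Y (f j) z) = Bf ip Y (P a) z" for a z
    unfolding P_def by (simp add: linear_sum[OF Bf_lin1[OF Y]] linear_scale[OF Bf_lin1[OF Y]] gg_sym)
  have vb: "gg ip (v j) b = Bf ip Y (f j) b - (1/2) * Bf ip Y (f j) (P b)" for j b
    unfolding v_def by (simp add: gg_diff1 gg_scale1 Psa w)
  have S: "(\<Sum>j<m. gg ip (x j) a * gg ip (v j) b) = Bf ip Y (P a) b - (1/2) * Bf ip Y (P a) (P b)" for a b
  proof -
    have "(\<Sum>j<m. gg ip (x j) a * gg ip (v j) b)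
       = (\<Sum>j<m. gg ip (x j) a * Bf ip Y (f j) b) - (1/2) * (\<Sum>j<m. gg ip (x j) a * Bf ip Y (f j) (P b))"
      by (simp add: vb algebra_simps sum_subtractf sum_distrib_left)
    then show ?thesis by (simp add: Bfs)
  qed
  define Z where "Z = Y - (\<Sum>j<m. wedge (x j) (v j))"
  have ZL: "Z \<in> Lambda2" using Y by (simp add: Z_def)
  have "ip (0, Z) (0, wedge a b) = 0" for a b
  proof -
    have "ip (0, Z) (0, wedge a b) = Bf ip Y a b - (\<Sum>j<m. ip (0, wedge (x j) (v j)) (0, wedge a b))"
      unfolding Z_def using Y by (simp add: ip_diff1 ip_sum1 Bf_def)
    also have "(\<Sum>j<m. ip (0, wedge (x j) (v j)) (0, wedge a b))
        = (\<Sum>j<m. gg ip (x j) a * gg ip (v j) b) - (\<Sum>j<m. gg ip (x j) b * gg ip (v j) a)"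
      by (simp add: ip_wedge gg_def sum_subtractf)
    also have "\<dots> = Bf ip Y (P a) b - (1/2) * Bf ip Y (P a) (P b) - (Bf ip Y (P b) a - (1/2) * Bf ip Y (P b) (P a))"
      by (simp add: S)
    finally have 1: "ip (0, Z) (0, wedge a b) = Bf ip Y a b - Bf ip Y (P a) b - Bf ip Y a (P b) + Bf ip Y (P a) (P b)"
      using Bf_antisym[OF Y, of "P b" a] Bf_antisym[OF Y, of "P b" "P a"] by simp
    have 2: "Bf ip Y (a - P a) (b - P b) = Bf ip Y a b - Bf ip Y (P a) b - Bf ip Y a (P b) + Bf ip Y (P a) (P b)"
      by (simp add: linear_diff[OF Bf_lin1[OF Y]] linear_diff[OF Bf_lin2[OF Y]])
    have oa: "\<forall>s\<in>X. gg ip (a - P a) s = 0" using Porth span_base by blast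
    have ob: "\<forall>s\<in>X. gg ip (b - P b) s = 0" using Porth span_base by blast
    have "Bf ip Y (a - P a) (b - P b) = 0"
      using par_lemma[OF indX cX oa ob]
    proof
      assume "a - P a = 0" then show ?thesis using linear_0[OF Bf_lin1[OF Y]] by simp
    next
      assume "\<exists>r. b - P b = r *\<^sub>R (a - P a)"
      then show ?thesis using Bf_par[OF Y] by auto
    qed
    then show ?thesis using 1 2 by simp
  qed
  then have "Z = 0" by (intro L2_ortho_zero[OF ZL]) blast
  then have "Y = (\<Sum>j<m. wedge (x j) (v j))" by (simp add: Z_def)
  then show "\<exists>v. Y = (\<Sum>j<CARD('n) - 1. wedge (x j) (v j)) \<and>
              (\<forall>j<CARD('n) - 1. eunorm ip (v j, 0) \<le> 1 * eunorm ip (0, Y) / \<epsilon>)"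
    using bound unfolding m_def by blast
qed

end

theorem mainTheorem9:
  fixes ip :: "((real^'n) \<times> (real^'n^'n)) \<Rightarrow> ((real^'n) \<times> (real^'n^'n)) \<Rightarrow> real"
  assumes "CARD('n) \<ge> 2"
    and "adequate ip"
  shows "\<exists>K1::real. \<forall>(x :: nat \<Rightarrow> real^'n) (Y :: real^'n^'n) (\<epsilon>::real).
           Y \<in> Lambda2 \<and> \<epsilon> > 0 \<and> MinHeight ip (CARD('n) - 1) x \<ge> \<epsilon> \<longrightarrow>
           (\<exists>v :: nat \<Rightarrow> real^'n.
              Y = (\<Sum>j<CARD('n) - 1. wedge (x j) (v j)) \<and>
              (\<forall>j<CARD('n) - 1. eunorm ip (v j, 0) \<le> K1 * eunorm ip (0, Y) / \<epsilon>))"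
  using main_aux[OF assms(2) assms(1)] .

end
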